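(* For infinitely many $n\in\mathbb{N}$ there exist matroids $M=(E,\mathcal{I})$ and $M'=(E,\mathcal{I}')$ over the same ground set $E$ with $|E|=n$ and a weight function $w:E\to\{0,1\}$ such that $M$ and $M'$ have exactly two common bases $B$ and $B'$, and these satisfy: (1) $w(B)=0$ and $w(B')=1$; (2) $B\cap B'=\emptyset$ and $|B|=|B'|=n/2$.
   Context: A common basis of $M$ and $M'$ is a set that is a basis of both. $w(S)=\sum_{e\in S}w(e)$. *)

theory Defs
  imports Main
begin

definition matroid :: "'a set \<Rightarrow> 'a set set \<Rightarrow> bool" where
  "matroid E Ind \<longleftrightarrow>
     finite E \<and>
     (\<forall>X\<in>Ind. X \<subseteq> E) \<and>
     {} \<in> Ind \<and>
     (\<forall>X Y. X \<in> Ind \<and> Y \<subseteq> X \<longrightarrow> Y \<in> Ind) \<and>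
     (\<forall>X Y. X \<in> Ind \<and> Y \<in> Ind \<and> card X < card Y \<longrightarrow>
        (\<exists>e\<in>Y - X. insert e X \<in> Ind))"

definition basis :: "'a set set \<Rightarrow> 'a set \<Rightarrow> bool" where
  "basis Ind B \<longleftrightarrow> B \<in> Ind \<and> (\<forall>X\<in>Ind. B \<subseteq> X \<longrightarrow> X = B)"

end

theory Submission
  imports Defs "HOL-Library.Infinite_Set"
begin

lemma pm_matroid:
  assumes "finite E"
  shows "matroid E {X. X \<subseteq> E \<and> inj_on f X}"
  unfolding matroid_def
proof (intro conjI allI impI)
  fix X Y assume h: "X \<in> {X. X \<subseteq> E \<and> inj_on f X} \<and> Y \<in> {X. X \<subseteq> E \<and> inj_on f X} \<and> card X < card Y"
  then have fX: "finite X" "finite Y" using assms finite_subset by auto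
  have "card (f ` X) < card (f ` Y)" using h by (simp add: card_image)
  then have "\<not> f ` Y \<subseteq> f ` X" using fX by (meson card_mono finite_imageI not_le)
  then obtain y where y: "y \<in> Y" "f y \<notin> f ` X" by auto
  then have "y \<notin> X" by auto
  moreover have "insert y X \<in> {X. X \<subseteq> E \<and> inj_on f X}" using h y by auto
  ultimately show "\<exists>e\<in>Y - X. insert e X \<in> {X. X \<subseteq> E \<and> inj_on f X}" using y by blast
qed (use assms inj_on_subset in auto)

lemma pm_basis:
  "basis {X. X \<subseteq> E \<and> inj_on f X} S \<longleftrightarrow> S \<subseteq> E \<and> inj_on f S \<and> f ` S = f ` E"
proof
  assume b: "basis {X. X \<subseteq> E \<and> inj_on f X} S"
  then have s: "S \<subseteq> E" "inj_on f S" by (auto simp: basis_def)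
  have "f ` E \<subseteq> f ` S"
  proof
    fix z assume "z \<in> f ` E"
    then obtain e where e: "e \<in> E" "z = f e" by auto
    show "z \<in> f ` S"
    proof (rule ccontr)
      assume "z \<notin> f ` S"
      then have "insert e S \<in> {X. X \<subseteq> E \<and> inj_on f X}" "e \<notin> S" using s e by auto
      then show False using b unfolding basis_def by blast
    qed
  qed
  then show "S \<subseteq> E \<and> inj_on f S \<and> f ` S = f ` E" using s by auto
next
  assume s: "S \<subseteq> E \<and> inj_on f S \<and> f ` S = f ` E"
  show "basis {X. X \<subseteq> E \<and> inj_on f X} S" unfolding basis_def
  proof (intro conjI ballI impI)
    fix X assume X: "X \<in> {X. X \<subseteq> E \<and> inj_on f X}" "S \<subseteq> X"
    have "X \<subseteq> S"
    proof
      fix x assume "x \<in> X"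
      then have "f x \<in> f ` S" using s X by auto
      then obtain t where "t \<in> S" "f t = f x" by auto
      then show "x \<in> S" using X \<open>x \<in> X\<close> by (metis (mono_tags, lifting) inj_on_def mem_Collect_eq subsetD)
    qed
    then show "X = S" using X by auto
  qed (use s in auto)
qed

definition gg :: "nat \<Rightarrow> nat \<Rightarrow> nat" where
  "gg k x = (if x + 1 = 2 * k then 0 else (x + 1) div 2)"

lemma common_bases:
  assumes k: "k \<ge> 1"
  shows "{S. basis {X. X \<subseteq> {..<2*k} \<and> inj_on (\<lambda>x. x div 2) X} S \<and>
              basis {X. X \<subseteq> {..<2*k} \<and> inj_on (gg k) X} S}
         = {{x\<in>{..<2*k}. even x}, {x\<in>{..<2*k}. odd x}}" (is "?L = ?R")
proof
  show "?L \<subseteq> ?R"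
  proof
    fix S assume "S \<in> ?L"
    then have S: "S \<subseteq> {..<2*k}" "inj_on (\<lambda>x. x div 2) S" "(\<lambda>x. x div 2) ` S = (\<lambda>x. x div 2) ` {..<2*k}"
      "inj_on (gg k) S" "gg k ` S = gg k ` {..<2*k}" by (auto simp: pm_basis)
    have no_both: "\<not> (2*i \<in> S \<and> 2*i+1 \<in> S)" for i
    proof
      assume h: "2*i \<in> S \<and> 2*i+1 \<in> S"
      have "(2*i::nat) div 2 = (2*i+1) div 2" by simp
      then have "2*i = 2*i+1" using inj_onD[OF S(2)] h by blast
      then show False by simp
    qed
    show "S \<in> ?R"
    proof (cases "0 \<in> S")
      case True
      have "2*i \<in> S" if "i < k" for i
        using that
      proof (induction i)
        case 0 then show ?case using True by simp
      next
        case (Suc i)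
        have a: "2*i+1 \<notin> S" using no_both Suc by auto
        have "gg k (2*i+1) = i+1" using Suc.prems by (simp add: gg_def)
        moreover have "2*i+1 \<in> {..<2*k}" using Suc.prems by auto
        ultimately obtain s where s: "s \<in> S" "gg k s = i+1" using S(5) by (metis imageE imageI)
        then have "s < 2*k" using S(1) by auto
        then have "s = 2*i+1 \<or> s = 2*i+2" using s(2) by (auto simp: gg_def split: if_splits)
        then show ?case using a s by auto
      qed
      note ev = this
      have "S = {x\<in>{..<2*k}. even x}"
      proof (intro set_eqI iffI)
        fix x assume x: "x \<in> S"
        then have "x < 2*k" using S(1) by auto
        moreover have "even x"
        proof (rule ccontr)
          assume "odd x"
          then obtain i where i: "x = 2*i+1" by (blast elim: oddE)
          then have "i < k" using \<open>x < 2*k\<close> by simp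
          then show False using ev no_both x i by blast
        qed
        ultimately show "x \<in> {x\<in>{..<2*k}. even x}" by simp
      next
        fix x assume x: "x \<in> {x\<in>{..<2*k}. even x}"
        then obtain i where i: "x = 2*i" by (blast elim: evenE)
        then have "i < k" using x by simp
        then show "x \<in> S" using ev i by blast
      qed
      then show ?thesis by simp
    next
      case False
      have "0 \<in> (\<lambda>x. x div 2) ` {..<2*k}" using k by (intro image_eqI[of _ _ 0]) auto
      then obtain s where "s \<in> S" "s div 2 = 0" using S(3) by (metis imageE)
      moreover have "s div 2 = 0 \<Longrightarrow> s = 0 \<or> s = 1" by auto
      ultimately have one: "1 \<in> S" using False by auto
      have "2*i+1 \<in> S" if "i < k" for i
        using that
      proof (induction i)
        case 0 then show ?case using one by simp
      next
        case (Suc i)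
        have "gg k (2*i+1) = i+1" "gg k (2*i+2) = i+1" using Suc.prems by (auto simp: gg_def)
        note gs = this
        have "2*i+1 \<in> S" using Suc by simp
        then have a: "2*i+2 \<notin> S"
        proof (intro notI)
          assume "2*i+1 \<in> S" "2*i+2 \<in> S"
          moreover have "gg k (2*i+1) = gg k (2*i+2)" using gs by simp
          ultimately have "2*i+1 = 2*i+2" using inj_onD[OF S(4)] by blast
          then show False by simp
        qed
        have "(2*i+2) div 2 = i+1" by simp
        moreover have "2*i+2 \<in> {..<2*k}" using Suc.prems by auto
        then have "(2*i+2) div 2 \<in> (\<lambda>x. x div 2) ` {..<2*k}" by (rule imageI)
        then have "i+1 \<in> (\<lambda>x. x div 2) ` S" using S(3) by simp
        then obtain s where s: "s \<in> S" "s div 2 = i+1" by auto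
        have "s = 2*(s div 2) + s mod 2" by simp
        then have "s = 2*i+2 + s mod 2" using s(2) by simp
        moreover have "s mod 2 = 0 \<or> s mod 2 = 1" by auto
        ultimately have "s = 2*i+2 \<or> s = 2*i+3" by auto
        then have "s = 2*i+3" using a s by auto
        then have "2 * Suc i + 1 = s" by simp
        then show ?case using s(1) by simp
      qed
      note od = this
      have "S = {x\<in>{..<2*k}. odd x}"
      proof (intro set_eqI iffI)
        fix x assume x: "x \<in> S"
        then have "x < 2*k" using S(1) by auto
        moreover have "odd x"
        proof
          assume "even x"
          then obtain i where i: "x = 2*i" by (blast elim: evenE)
          then have "i < k" using \<open>x < 2*k\<close> by simp
          then show False using od no_both x i by blast
        qed
        ultimately show "x \<in> {x\<in>{..<2*k}. odd x}" by simp
      next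
        fix x assume x: "x \<in> {x\<in>{..<2*k}. odd x}"
        then obtain i where i: "x = 2*i+1" by (blast elim: oddE)
        then have "i < k" using x by simp
        then show "x \<in> S" using od i by blast
      qed
      then show ?thesis by simp
    qed
  qed
next
  have Ev: "{x\<in>{..<2*k}. even x} = (\<lambda>i. 2*i) ` {..<k}"
    by (auto elim!: evenE)
  have Od: "{x\<in>{..<2*k}. odd x} = (\<lambda>i. 2*i+1) ` {..<k}"
    by (auto elim!: oddE)
  have i1: "inj_on (\<lambda>x. x div 2) ((\<lambda>i. 2*i) ` {..<k})"
    by (auto simp: inj_on_def)
  have i2: "inj_on (\<lambda>x. x div 2) ((\<lambda>i. 2*i+1) ` {..<k})"
    by (auto simp: inj_on_def)
  have gE: "gg k (2*i) = i" for i
  proof -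
    have "2*i+1 \<noteq> 2*k" by presburger
    then show ?thesis by (simp add: gg_def)
  qed
  have gO: "gg k (2*i+1) = (if i + 1 = k then 0 else i+1)" for i
    by (auto simp: gg_def)
  have gO': "gg k (Suc (2*i)) = (if i + 1 = k then 0 else i+1)" for i
    using gO[of i] by simp
  have i3: "inj_on (gg k) ((\<lambda>i. 2*i) ` {..<k})"
    by (auto simp: inj_on_def gE)
  have i4: "inj_on (gg k) ((\<lambda>i. 2*i+1) ` {..<k})"
  proof -
    have "inj_on (\<lambda>i. 2*i+1) {..<k::nat}" by (auto simp: inj_on_def)
    moreover have "inj_on (\<lambda>i. if i + 1 = k then 0 else i+1) {..<k}"
      by (auto simp: inj_on_def split: if_splits)
    moreover have "gg k \<circ> (\<lambda>i. 2*i+1) = (\<lambda>i. if i + 1 = k then 0 else i+1)"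
      using gO by (auto simp: fun_eq_iff)
    ultimately show ?thesis using comp_inj_on_iff[of "\<lambda>i. 2*i+1" "{..<k}" "gg k"]
      by metis
  qed
  have fE: "(\<lambda>x. x div 2) ` {..<2*k} = {..<k}"
  proof (intro set_eqI iffI)
    fix j assume "j \<in> {..<k}" then show "j \<in> (\<lambda>x. x div 2) ` {..<2*k}"
      by (intro image_eqI[of _ _ "2*j"]) auto
  qed auto
  have f1: "(\<lambda>x. x div 2) ` ((\<lambda>i. 2*i) ` {..<k}) = {..<k}"
    by (auto simp: image_image)
  have f2: "(\<lambda>x. x div 2) ` ((\<lambda>i. 2*i+1) ` {..<k}) = {..<k}"
    by (auto simp: image_image)
  have gEE: "gg k ` {..<2*k} = {..<k}"
  proof (intro set_eqI iffI)
    fix j assume "j \<in> {..<k}" then show "j \<in> gg k ` {..<2*k}"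
      by (intro image_eqI[of _ _ "2*j"]) (auto simp: gE)
  next
    fix j assume "j \<in> gg k ` {..<2*k}"
    then show "j \<in> {..<k}" using k by (auto simp: gg_def)
  qed
  have g1: "gg k ` ((\<lambda>i. 2*i) ` {..<k}) = {..<k}"
    by (auto simp: image_image gE)
  have g2: "gg k ` ((\<lambda>i. 2*i+1) ` {..<k}) = {..<k}"
  proof (intro set_eqI iffI)
    fix j assume j: "j \<in> {..<k}"
    show "j \<in> gg k ` ((\<lambda>i. 2*i+1) ` {..<k})"
    proof (cases j)
      case 0
      have "gg k (2*(k-1)+1) = 0" using gO[of "k-1"] k by simp
      then show ?thesis using k 0 unfolding image_image by (intro image_eqI[of _ _ "k-1"]) auto
    next
      case (Suc m)
      have "gg k (2*m+1) = Suc m" using gO[of m] j Suc by simp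
      then show ?thesis using j Suc unfolding image_image by (intro image_eqI[of _ _ "m"]) auto
    qed
  next
    fix j assume "j \<in> gg k ` ((\<lambda>i. 2*i+1) ` {..<k})"
    then show "j \<in> {..<k}" using k by (auto simp: gO gO')
  qed
  have s1: "(\<lambda>i. 2*i) ` {..<k} \<subseteq> {..<2*k}" by auto
  have s2: "(\<lambda>i. 2*i+1) ` {..<k} \<subseteq> {..<2*k}" by auto
  show "?R \<subseteq> ?L"
  proof -
    have "basis {X. X \<subseteq> {..<2*k} \<and> inj_on (\<lambda>x. x div 2) X} ((\<lambda>i. 2*i) ` {..<k})"
      unfolding pm_basis using s1 i1 f1 fE by simp
    moreover have "basis {X. X \<subseteq> {..<2*k} \<and> inj_on (gg k) X} ((\<lambda>i. 2*i) ` {..<k})"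
      unfolding pm_basis using s1 i3 g1 gEE by simp
    moreover have "basis {X. X \<subseteq> {..<2*k} \<and> inj_on (\<lambda>x. x div 2) X} ((\<lambda>i. 2*i+1) ` {..<k})"
      unfolding pm_basis using s2 i2 f2 fE by simp
    moreover have "basis {X. X \<subseteq> {..<2*k} \<and> inj_on (gg k) X} ((\<lambda>i. 2*i+1) ` {..<k})"
      unfolding pm_basis using s2 i4 g2 gEE by simp
    ultimately show ?thesis unfolding Ev Od by blast
  qed
qed

lemma witness:
  assumes k: "k \<ge> 1"
  shows "\<exists>(E :: nat set) Ind Ind' (w :: nat \<Rightarrow> nat) B B'.
     matroid E Ind \<and> matroid E Ind' \<and> card E = 2*k \<and>
     (\<forall>e\<in>E. w e \<in> {0, 1}) \<and>
     B \<noteq> B' \<and> {S. basis Ind S \<and> basis Ind' S} = {B, B'} \<and>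
     (\<Sum>e\<in>B. w e) = 0 \<and> (\<Sum>e\<in>B'. w e) = 1 \<and>
     B \<inter> B' = {} \<and> 2 * card B = 2*k \<and> 2 * card B' = 2*k"
proof -
  let ?E = "{..<2*k}"
  let ?B = "{x\<in>{..<2*k}. even x}"
  let ?B' = "{x\<in>{..<2*k}. odd x}"
  let ?w = "\<lambda>x::nat. if x = 1 then (1::nat) else 0"
  have Ev: "?B = (\<lambda>i. 2*i) ` {..<k}"
    by (auto elim!: evenE)
  have Od: "?B' = (\<lambda>i. 2*i+1) ` {..<k}"
    by (auto elim!: oddE)
  have cB: "card ?B = k" unfolding Ev by (subst card_image) (auto simp: inj_on_def)
  have cB': "card ?B' = k" unfolding Od by (subst card_image) (auto simp: inj_on_def)
  have "0 \<in> ?B" using k by simp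
  moreover have "0 \<notin> ?B'" by simp
  ultimately have ne: "?B \<noteq> ?B'" by blast
  have "?w 1 = 1" by simp
  have s1: "(\<Sum>e\<in>?B. ?w e) = 0" by (rule sum.neutral) auto
  have s2: "(\<Sum>e\<in>?B'. ?w e) = 1"
  proof -
    have "1 \<in> ?B'" using k by simp
    then have "(\<Sum>e\<in>?B'. ?w e) = ?w 1 + (\<Sum>e\<in>?B' - {1}. ?w e)"
      by (subst sum.remove) auto
    also have "(\<Sum>e\<in>?B' - {1}. ?w e) = 0" by (rule sum.neutral) auto
    finally show ?thesis by simp
  qed
  have d: "?B \<inter> ?B' = {}" by auto
  have m1: "matroid ?E {X. X \<subseteq> ?E \<and> inj_on (\<lambda>x. x div 2) X}" by (rule pm_matroid) simp
  have m2: "matroid ?E {X. X \<subseteq> ?E \<and> inj_on (gg k) X}" by (rule pm_matroid) simp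
  have cE: "card ?E = 2*k" by simp
  have wE: "\<forall>e\<in>?E. ?w e \<in> {0, 1}" by simp
  have cb: "{S. basis {X. X \<subseteq> ?E \<and> inj_on (\<lambda>x. x div 2) X} S \<and>
              basis {X. X \<subseteq> ?E \<and> inj_on (gg k) X} S} = {?B, ?B'}"
    by (rule common_bases[OF k])
  have c1: "2 * card ?B = 2*k" using cB by simp
  have c2: "2 * card ?B' = 2*k" using cB' by simp
  show ?thesis
    apply (rule exI[of _ ?E])
    apply (rule exI[of _ "{X. X \<subseteq> ?E \<and> inj_on (\<lambda>x. x div 2) X}"])
    apply (rule exI[of _ "{X. X \<subseteq> ?E \<and> inj_on (gg k) X}"])
    apply (rule exI[of _ ?w])
    apply (rule exI[of _ ?B])
    apply (rule exI[of _ ?B'])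
    apply (intro conjI)
    apply (fact m1)
    apply (fact m2)
    apply (fact cE)
    apply (fact wE)
    apply (fact ne)
    apply (fact cb)
    apply (fact s1)
    apply (fact s2)
    apply (fact d)
    apply (fact c1)
    apply (fact c2)
    done
qed

theorem theorem19:
  shows "infinite {n :: nat. \<exists>(E :: nat set) Ind Ind' (w :: nat \<Rightarrow> nat) B B'.
     matroid E Ind \<and> matroid E Ind' \<and> card E = n \<and>
     (\<forall>e\<in>E. w e \<in> {0, 1}) \<and>
     B \<noteq> B' \<and> {S. basis Ind S \<and> basis Ind' S} = {B, B'} \<and>
     (\<Sum>e\<in>B. w e) = 0 \<and> (\<Sum>e\<in>B'. w e) = 1 \<and>
     B \<inter> B' = {} \<and> 2 * card B = n \<and> 2 * card B' = n}"
  unfolding infinite_nat_iff_unbounded_le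
proof
  fix m :: nat
  show "\<exists>n\<ge>m. n \<in> {n :: nat. \<exists>(E :: nat set) Ind Ind' (w :: nat \<Rightarrow> nat) B B'.
     matroid E Ind \<and> matroid E Ind' \<and> card E = n \<and>
     (\<forall>e\<in>E. w e \<in> {0, 1}) \<and>
     B \<noteq> B' \<and> {S. basis Ind S \<and> basis Ind' S} = {B, B'} \<and>
     (\<Sum>e\<in>B. w e) = 0 \<and> (\<Sum>e\<in>B'. w e) = 1 \<and>
     B \<inter> B' = {} \<and> 2 * card B = n \<and> 2 * card B' = n}" (is "\<exists>n\<ge>m. n \<in> ?S")
  proof -
    have mem: "2*(m+1) \<in> ?S" unfolding mem_Collect_eq by (rule witness) simp
    show ?thesis
      apply (rule exI[of _ "2*(m+1)"])
      apply (rule conjI)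
       apply simp
      apply (fact mem)
      done
  qed
qed

end
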